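(* Let $D_1,\ldots,D_q\subseteq V\times V$ be demand graphs with $|D_i|=k$, reordered such that $\mathrm{mincut}_G(D_1)<\mathrm{mincut}_G(D_2)<\ldots<\mathrm{mincut}_G(D_q)$. Then the polynomials $P_{1}, P_{2}, \ldots, P_{q}$ are linearly independent.
   Context: $G=(V,E,w)$ is an undirected edge-weighted graph with $n=|V|$. For a partition $\Pi$ of $V$, $\Pi(v)$ is the part containing $v$, and $\mathrm{cut}_G(\Pi)=\sum_{uv\in E:\Pi(u)\neq\Pi(v)} w(uv)$. A partition agrees with (is feasible for) a demand graph $D$ if every $uv\in D$ has $\Pi(u)\neq\Pi(v)$, and $\mathrm{mincut}_G(D)$ is the minimum of $\mathrm{cut}_G(\Pi)$ over partitions agreeing with $D$. Each vertex $v$ gets a variable $\phi_v$ taking values in $[n]$ (a partition is instantiated by assigning each vertex a label of its part). For each demand graph $D_j$ define $P_j=\prod_{uv\in D_j}(\phi_u-\phi_v)$, a polynomial of degree $k$; a partition $\Pi$ is feasible for $D_j$ iff $P_j(\Pi)\neq 0$. *)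

theory Defs
  imports Complex_Main "HOL-Library.Poly_Mapping" "HOL-Library.Disjoint_Sets"
begin

definition undirected_graph :: "'v set \<Rightarrow> 'v set set \<Rightarrow> bool" where
  "undirected_graph V E \<longleftrightarrow> finite V \<and> (\<forall>e\<in>E. e \<subseteq> V \<and> card e = 2)"

definition same_part :: "'v set set \<Rightarrow> 'v \<Rightarrow> 'v \<Rightarrow> bool" where
  "same_part P u v \<longleftrightarrow> (\<exists>X\<in>P. u \<in> X \<and> v \<in> X)"

definition cut_weight :: "'v set set \<Rightarrow> ('v set \<Rightarrow> real) \<Rightarrow> 'v set set \<Rightarrow> real" where
  "cut_weight E w P = (\<Sum>e\<in>{e\<in>E. \<not> (\<exists>u v. e = {u, v} \<and> same_part P u v)}. w e)"

definition agrees :: "'v set set \<Rightarrow> ('v \<times> 'v) set \<Rightarrow> bool" where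
  "agrees P D \<longleftrightarrow> (\<forall>(u, v)\<in>D. \<not> same_part P u v)"

definition mincut :: "'v set \<Rightarrow> 'v set set \<Rightarrow> ('v set \<Rightarrow> real) \<Rightarrow> ('v \<times> 'v) set \<Rightarrow> real" where
  "mincut V E w D = Inf (cut_weight E w ` {P. partition_on V P \<and> agrees P D})"

definition demand_graph :: "'v set \<Rightarrow> ('v \<times> 'v) set \<Rightarrow> bool" where
  "demand_graph V D \<longleftrightarrow> D \<subseteq> V \<times> V \<and> (\<forall>(u, v)\<in>D. u \<noteq> v)"

text \<open>Multivariate polynomials with real coefficients in variables phi_v (v a vertex),
  as finitely supported maps from monomials (exponent vectors) to coefficients.\<close>
type_synonym 'v mpoly = "('v \<Rightarrow>\<^sub>0 nat) \<Rightarrow>\<^sub>0 real"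

definition phi :: "'v \<Rightarrow> 'v mpoly" where
  "phi v = Poly_Mapping.single (Poly_Mapping.single v 1) 1"

definition const_poly :: "real \<Rightarrow> 'v mpoly" where
  "const_poly c = Poly_Mapping.single 0 c"

definition demand_poly :: "('v \<times> 'v) set \<Rightarrow> 'v mpoly" where
  "demand_poly D = (\<Prod>(u, v)\<in>D. phi u - phi v)"

end

theory Submission imports Defs begin

definition mon :: "('v \<Rightarrow> real) \<Rightarrow> ('v \<Rightarrow>\<^sub>0 nat) \<Rightarrow> real" where
  "mon f m = (\<Prod>v\<in>Poly_Mapping.keys m. f v ^ Poly_Mapping.lookup m v)"

definition ev :: "('v \<Rightarrow> real) \<Rightarrow> 'v mpoly \<Rightarrow> real" where
  "ev f p = (\<Sum>m\<in>Poly_Mapping.keys p. Poly_Mapping.lookup p m * mon f m)"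

lemma mon_superset: "finite S \<Longrightarrow> Poly_Mapping.keys m \<subseteq> S \<Longrightarrow>
   mon f m = (\<Prod>v\<in>S. f v ^ Poly_Mapping.lookup m v)"
  unfolding mon_def
  by (rule prod.mono_neutral_left) (auto simp: in_keys_iff)

lemma mon_add: "mon f (a + b) = mon f a * mon f b"
proof -
  let ?S = "Poly_Mapping.keys a \<union> Poly_Mapping.keys b"
  have k: "Poly_Mapping.keys (a+b) \<subseteq> ?S" by (rule keys_add)
  show ?thesis
    by (simp add: mon_superset[OF _ k] mon_superset[of ?S a] mon_superset[of ?S b]
        lookup_add power_add prod.distrib)
qed

lemma mon_zero[simp]: "mon f 0 = 1" by (simp add: mon_def)

lemma mon_single: "mon f (Poly_Mapping.single v 1) = f v"
  by (simp add: mon_def)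

lemma ev_superset: "finite S \<Longrightarrow> Poly_Mapping.keys p \<subseteq> S \<Longrightarrow>
   ev f p = (\<Sum>m\<in>S. Poly_Mapping.lookup p m * mon f m)"
  unfolding ev_def
  by (rule sum.mono_neutral_left) (auto simp: in_keys_iff)

lemma ev_add: "ev f (p + q) = ev f p + ev f q"
proof -
  let ?S = "Poly_Mapping.keys p \<union> Poly_Mapping.keys q"
  have k: "Poly_Mapping.keys (p+q) \<subseteq> ?S" by (rule keys_add)
  show ?thesis
    by (simp add: ev_superset[OF _ k] ev_superset[of ?S p] ev_superset[of ?S q]
        lookup_add distrib_right sum.distrib)
qed

lemma ev_zero[simp]: "ev f 0 = 0" by (simp add: ev_def)

lemma ev_single: "ev f (Poly_Mapping.single m a) = a * mon f m"
  by (cases "a = 0") (simp_all add: ev_def)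

lemma ev_diff: "ev f (p - q) = ev f p - ev f q"
  using ev_add[of f "p - q" q] by simp

lemma update_eq_add: "a \<notin> Poly_Mapping.keys g \<Longrightarrow> Poly_Mapping.update a b g = g + Poly_Mapping.single a b"
  by (rule poly_mapping_eqI) (auto simp: lookup_update lookup_add lookup_single in_keys_iff)

lemma ev_mult_single: "ev f (Poly_Mapping.single a b * q) = b * mon f a * ev f q"
proof (induction q rule: Poly_Mapping.update_induct)
  case const then show ?case by simp
next
  case (update g c d)
  then show ?case
    by (simp add: update_eq_add distrib_left ev_add mult_single ev_single mon_add algebra_simps)
qed

lemma ev_mult: "ev f (p * q) = ev f p * ev f q"
proof (induction p rule: Poly_Mapping.update_induct)
  case const then show ?case by simp
next
  case (update g c d)
  then show ?case
    using ev_mult_single[of f c d q] by (simp add: update_eq_add distrib_right ev_add ev_single)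
qed

lemma ev_one: "ev f 1 = 1"
  by (simp add: ev_def)

lemma ev_prod: "ev f (\<Prod>x\<in>A. g x) = (\<Prod>x\<in>A. ev f (g x))"
  by (induction A rule: infinite_finite_induct) (simp_all add: ev_one ev_mult)

lemma ev_sum: "ev f (\<Sum>x\<in>A. g x) = (\<Sum>x\<in>A. ev f (g x))"
  by (induction A rule: infinite_finite_induct) (simp_all add: ev_add)

lemma ev_phi: "ev f (phi v) = f v"
  by (simp add: phi_def ev_single mon_single del: One_nat_def)

lemma ev_const: "ev f (const_poly c) = c"
  by (simp add: const_poly_def ev_single)

lemma ev_demand: "ev f (demand_poly D) = (\<Prod>(u,v)\<in>D. f u - f v)"
  by (simp add: demand_poly_def ev_prod case_prod_beta ev_diff ev_phi)

lemma mincut_attained: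
  assumes "finite V" "demand_graph V D"
  shows "\<exists>P. partition_on V P \<and> agrees P D \<and> cut_weight E w P = mincut V E w D \<and>
     (\<forall>P'. partition_on V P' \<and> agrees P' D \<longrightarrow> mincut V E w D \<le> cut_weight E w P')"
proof -
  let ?S = "{P. partition_on V P \<and> agrees P D}"
  have fin: "finite ?S" using finitely_many_partition_on[OF assms(1)]
    by (rule finite_subset[rotated]) auto
  have "(\<lambda>x. {x}) ` V \<in> ?S"
    using assms(2) by (auto simp: partition_on_singletons agrees_def same_part_def demand_graph_def)
  then have ne: "cut_weight E w ` ?S \<noteq> {}" by blast
  have m: "mincut V E w D = Min (cut_weight E w ` ?S)"
    unfolding mincut_def using fin ne by (simp add: cInf_eq_Min)
  have "Min (cut_weight E w ` ?S) \<in> cut_weight E w ` ?S"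
    using fin ne by (intro Min_in) auto
  then obtain P where P: "P \<in> ?S" "cut_weight E w P = mincut V E w D" using m by auto
  have "\<forall>P'. P' \<in> ?S \<longrightarrow> mincut V E w D \<le> cut_weight E w P'"
    using fin m by auto
  with P show ?thesis by auto
qed

lemma labeling:
  assumes "finite V" "partition_on V P"
  shows "\<exists>f::'v \<Rightarrow> real. \<forall>u\<in>V. \<forall>v\<in>V. (f u = f v \<longleftrightarrow> same_part P u v)"
proof -
  have "finite P" using finite_elements assms by blast
  then obtain g :: "'v set \<Rightarrow> nat" and n where g: "inj_on g P"
    using finite_imp_inj_to_nat_seg by blast
  define blk where "blk v = (SOME X. X \<in> P \<and> v \<in> X)" for v
  have blk: "blk v \<in> P \<and> v \<in> blk v" if "v \<in> V" for v
  proof -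
    have "\<exists>X. X \<in> P \<and> v \<in> X" using that partition_onD1[OF assms(2)] by auto
    then show ?thesis unfolding blk_def by (rule someI_ex)
  qed
  have disj: "X = Y" if "X \<in> P" "Y \<in> P" "v \<in> X" "v \<in> Y" for X Y v
    using partition_onD2[OF assms(2)] that by (auto simp: disjoint_def)
  have key: "blk u = blk v \<longleftrightarrow> same_part P u v" if "u \<in> V" "v \<in> V" for u v
  proof
    assume "blk u = blk v" then show "same_part P u v"
      using blk[OF that(1)] blk[OF that(2)] by (auto simp: same_part_def)
  next
    assume "same_part P u v"
    then obtain X where X: "X \<in> P" "u \<in> X" "v \<in> X" by (auto simp: same_part_def)
    show "blk u = blk v" using disj[OF X(1) _ X(2)] disj[OF X(1) _ X(3)] blk[OF that(1)] blk[OF that(2)]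
      by metis
  qed
  define f where "f v = real (g (blk v))" for v
  have "\<forall>u\<in>V. \<forall>v\<in>V. (f u = f v \<longleftrightarrow> same_part P u v)"
  proof (intro ballI)
    fix u v assume uv: "u \<in> V" "v \<in> V"
    have "f u = f v \<longleftrightarrow> blk u = blk v"
      unfolding f_def using g blk[OF uv(1)] blk[OF uv(2)] by (auto dest: inj_onD)
    then show "f u = f v \<longleftrightarrow> same_part P u v" using key[OF uv] by simp
  qed
  then show ?thesis by blast
qed

lemma ev_demand_nz:
  assumes "finite V" "demand_graph V D" "\<forall>u\<in>V. \<forall>v\<in>V. (f u = f v \<longleftrightarrow> same_part P u v)"
  shows "ev f (demand_poly D) \<noteq> 0 \<longleftrightarrow> agrees P D"
proof -
  have sub: "D \<subseteq> V \<times> V" using assms(2) by (simp add: demand_graph_def)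
  then have "finite D" using assms(1) finite_subset by blast
  then show ?thesis using sub assms(3)
    by (auto simp: ev_demand agrees_def case_prod_beta) (metis fst_conv snd_conv subsetD mem_Sigma_iff)+
qed

theorem lemma11:
  fixes V :: "'v set" and E :: "'v set set" and w :: "'v set \<Rightarrow> real"
    and D :: "nat \<Rightarrow> ('v \<times> 'v) set" and q k :: nat
  assumes "undirected_graph V E"
    and "\<And>i. i \<in> {1..q} \<Longrightarrow> demand_graph V (D i)"
    and "\<And>i. i \<in> {1..q} \<Longrightarrow> card (D i) = k"
    and "\<And>i j. i \<in> {1..q} \<Longrightarrow> j \<in> {1..q} \<Longrightarrow> i < j \<Longrightarrow>
           mincut V E w (D i) < mincut V E w (D j)"
  shows "\<forall>c :: nat \<Rightarrow> real.
           (\<Sum>i=1..q. const_poly (c i) * demand_poly (D i)) = 0 \<longrightarrow> (\<forall>i\<in>{1..q}. c i = 0)"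
proof (intro allI impI, rule ccontr)
  fix c :: "nat \<Rightarrow> real"
  assume eq: "(\<Sum>i=1..q. const_poly (c i) * demand_poly (D i)) = 0"
    and "\<not> (\<forall>i\<in>{1..q}. c i = 0)"
  then obtain j where j: "j \<in> {1..q}" "c j \<noteq> 0" by auto
  define i0 where "i0 = (LEAST i. i \<in> {1..q} \<and> c i \<noteq> 0)"
  have i0: "i0 \<in> {1..q}" "c i0 \<noteq> 0" using LeastI[of "\<lambda>i. i \<in> {1..q} \<and> c i \<noteq> 0", OF conjI[OF j]]
    unfolding i0_def by auto
  have below: "c i = 0" if "i \<in> {1..q}" "i < i0" for i
    using not_less_Least[of i "\<lambda>i. i \<in> {1..q} \<and> c i \<noteq> 0"] that unfolding i0_def by auto
  have finV: "finite V" using assms(1) by (simp add: undirected_graph_def)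
  obtain P where P: "partition_on V P" "agrees P (D i0)" "cut_weight E w P = mincut V E w (D i0)"
    using mincut_attained[OF finV assms(2)[OF i0(1)], of E w] by blast
  obtain f :: "'v \<Rightarrow> real" where f: "\<forall>u\<in>V. \<forall>v\<in>V. (f u = f v \<longleftrightarrow> same_part P u v)"
    using labeling[OF finV P(1)] by blast
  have above: "ev f (demand_poly (D i)) = 0" if "i \<in> {1..q}" "i0 < i" for i
  proof (rule ccontr)
    assume "ev f (demand_poly (D i)) \<noteq> 0"
    then have "agrees P (D i)" using ev_demand_nz[OF finV assms(2)[OF that(1)] f] by simp
    then have "mincut V E w (D i) \<le> cut_weight E w P"
      using mincut_attained[OF finV assms(2)[OF that(1)], of E w] P(1) by blast
    moreover have "mincut V E w (D i0) < mincut V E w (D i)" using assms(4)[OF i0(1) that(1) that(2)] .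
    ultimately show False using P(3) by simp
  qed
  have nz: "ev f (demand_poly (D i0)) \<noteq> 0"
    using ev_demand_nz[OF finV assms(2)[OF i0(1)] f] P(2) by simp
  have "0 = ev f (\<Sum>i=1..q. const_poly (c i) * demand_poly (D i))" using eq by simp
  also have "\<dots> = (\<Sum>i=1..q. c i * ev f (demand_poly (D i)))"
    by (simp add: ev_sum ev_mult ev_const)
  also have "\<dots> = c i0 * ev f (demand_poly (D i0))"
  proof -
    have "(\<Sum>i=1..q. c i * ev f (demand_poly (D i))) = c i0 * ev f (demand_poly (D i0))
       + (\<Sum>i\<in>{1..q} - {i0}. c i * ev f (demand_poly (D i)))"
      using i0(1) by (simp add: sum.remove)
    also have "(\<Sum>i\<in>{1..q} - {i0}. c i * ev f (demand_poly (D i))) = 0"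
    proof (rule sum.neutral, intro ballI)
      fix i assume "i \<in> {1..q} - {i0}"
      then show "c i * ev f (demand_poly (D i)) = 0"
        using below above by (cases "i < i0") auto
    qed
    finally show ?thesis by simp
  qed
  finally show False using nz i0(2) by simp
qed

end
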